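(* Let $k\geq1$ and $d_1,\dots,d_k\geq3$ be integers, and let $T=W_{d_1}\otimes\cdots\otimes W_{d_k}$. Let $A\subseteq(\mathbb{P}^1)^k$ be a zero-dimensional scheme such that $[T]\in\langle\nu_{d_1,\dots,d_k}(A)\rangle$. Then for all integers $a_1,\dots,a_k$ with $0\leq a_i\leq d_i-1$, we have $|\mathcal{I}_A(a_1,\dots,a_k)|\subseteq|\mathcal{I}_{Z_k}(a_1,\dots,a_k)|$; that is, every divisor of multidegree $(a_1,\dots,a_k)$ on $(\mathbb{P}^1)^k$ containing $A$ also contains $Z_k$.
   Context: Identify $S^d\mathbb{C}^2$ with binary forms in a basis $\{x,y\}$ (coordinates $x_i,y_i$ on the $i$-th factor), $W_d=x^{d-1}y$. $\nu_{d_1,\dots,d_k}:(\mathbb{P}^1)^k\to\mathbb{P}(S^{d_1}\mathbb{C}^2\otimes\cdots\otimes S^{d_k}\mathbb{C}^2)$, $([v_1],\dots,[v_k])\mapsto[v_1^{d_1}\otimes\cdots\otimes v_k^{d_k}]$ is the Segre–Veronese embedding; $\langle Y\rangle$ denotes linear span of a subscheme. $|\mathcal{I}_A(a_1,\dots,a_k)|$ is the projectivization of the space of multihomogeneous forms of multidegree $(a_1,\dots,a_k)$ vanishing on $A$ (divisors in $|\mathcal{O}(a_1,\dots,a_k)|$ containing $A$). Let $o_1=[x]\in\mathbb{P}^1$, $Z_1\subseteq\mathbb{P}^1$ the degree-2 scheme supported at $o_1$ with ideal $(\partial_y^2)$, and $Z_k=Z_1\times\cdots\times Z_1$. *)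

theory Defs
  imports Complex_Main "HOL-Library.Poly_Mapping"
begin

text \<open>Multigraded Cox ring of (P^1)^k: complex polynomials in the variables
  X_i = variable 2i and Y_i = variable 2i+1 (i < k), the coordinates x_i, y_i
  on the i-th factor.\<close>

type_synonym cpoly = "(nat \<Rightarrow>\<^sub>0 nat) \<Rightarrow>\<^sub>0 complex"

definition Xv :: "nat \<Rightarrow> cpoly" where
  "Xv i = Poly_Mapping.single (Poly_Mapping.single (2*i) 1) 1"

definition Yv :: "nat \<Rightarrow> cpoly" where
  "Yv i = Poly_Mapping.single (Poly_Mapping.single (2*i+1) 1) 1"

definition const_poly :: "complex \<Rightarrow> cpoly" where
  "const_poly c = Poly_Mapping.single 0 c"

definition Sring :: "nat \<Rightarrow> cpoly set" where
  "Sring k = {F. \<forall>m\<in>Poly_Mapping.keys F. \<forall>v\<in>Poly_Mapping.keys m. v < 2*k}"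

definition mdeg :: "(nat \<Rightarrow>\<^sub>0 nat) \<Rightarrow> nat \<Rightarrow> nat" where
  "mdeg m i = Poly_Mapping.lookup m (2*i) + Poly_Mapping.lookup m (2*i+1)"

text \<open>Multihomogeneous forms of multidegree (a_1,...,a_k) (a indexed from 0).\<close>
definition homog :: "nat \<Rightarrow> (nat \<Rightarrow> nat) \<Rightarrow> cpoly \<Rightarrow> bool" where
  "homog k a F \<longleftrightarrow> F \<in> Sring k \<and> (\<forall>m\<in>Poly_Mapping.keys F. \<forall>i<k. mdeg m i = a i)"

definition hcomp :: "nat \<Rightarrow> (nat \<Rightarrow> nat) \<Rightarrow> cpoly \<Rightarrow> cpoly" where
  "hcomp k a F = Abs_poly_mapping (\<lambda>m. if (\<forall>i<k. mdeg m i = a i) then Poly_Mapping.lookup F m else 0)"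

definition mh_ideal :: "nat \<Rightarrow> cpoly set \<Rightarrow> bool" where
  "mh_ideal k I \<longleftrightarrow> I \<subseteq> Sring k \<and> 0 \<in> I \<and>
     (\<forall>F\<in>I. \<forall>G\<in>I. F + G \<in> I) \<and>
     (\<forall>F\<in>I. \<forall>G\<in>Sring k. G * F \<in> I) \<and>
     (\<forall>F\<in>I. \<forall>a. hcomp k a F \<in> I)"

text \<open>Saturation with respect to the irrelevant ideal B = (x_1,y_1)...(x_k,y_k):
  B^N is generated by the monomials of multidegree (N,...,N).\<close>
definition B_saturated :: "nat \<Rightarrow> cpoly set \<Rightarrow> bool" where
  "B_saturated k I \<longleftrightarrow>
     (\<forall>F\<in>Sring k. (\<exists>N. \<forall>m. homog k (\<lambda>_. N) (Poly_Mapping.single m 1)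
                              \<longrightarrow> Poly_Mapping.single m 1 * F \<in> I) \<longrightarrow> F \<in> I)"

text \<open>Bounded Hilbert function: there is N such that dim (S_a / I_a) \<le> N for all a,
  i.e. any N+1 forms of multidegree a are linearly dependent modulo I.\<close>
definition bounded_hilbert :: "nat \<Rightarrow> cpoly set \<Rightarrow> bool" where
  "bounded_hilbert k I \<longleftrightarrow> (\<exists>N. \<forall>a f. (\<forall>j\<le>N. homog k a (f j)) \<longrightarrow>
      (\<exists>c::nat \<Rightarrow> complex. (\<exists>j\<le>N. c j \<noteq> 0) \<and> (\<Sum>j\<le>N. const_poly (c j) * f j) \<in> I))"

text \<open>Zero-dimensional closed subschemes A of (P^1)^k, represented by their
  (unique) B-saturated multihomogeneous ideal I_A in the Cox ring; zero-dimensional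
  means the (multigraded) Hilbert function is bounded.\<close>
definition zero_dim_scheme_ideal :: "nat \<Rightarrow> cpoly set \<Rightarrow> bool" where
  "zero_dim_scheme_ideal k I \<longleftrightarrow> mh_ideal k I \<and> B_saturated k I \<and> bounded_hilbert k I"

text \<open>Basis of S^{d_1}C^2 (x) ... (x) S^{d_k}C^2: the tensors
  x^{d_1-j_1} y^{j_1} (x) ... (x) x^{d_k-j_k} y^{j_k}, indexed by j with j_i \<le> d_i.\<close>
definition idx :: "nat \<Rightarrow> (nat \<Rightarrow> nat) \<Rightarrow> (nat \<Rightarrow> nat) set" where
  "idx k d = {j. \<forall>i. (i < k \<longrightarrow> j i \<le> d i) \<and> (k \<le> i \<longrightarrow> j i = 0)}"

text \<open>Pull-back along the Segre-Veronese map nu_d of a linear form L on the tensor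
  space (given by its values L j on the basis): the form
  (v_1,...,v_k) |-> L(v_1^{d_1} (x) ... (x) v_k^{d_k}) of multidegree d, computed by
  expanding (x_i x + y_i y)^{d_i} binomially.\<close>
definition nu_pull :: "nat \<Rightarrow> (nat \<Rightarrow> nat) \<Rightarrow> ((nat \<Rightarrow> nat) \<Rightarrow> complex) \<Rightarrow> cpoly" where
  "nu_pull k d L = (\<Sum>j\<in>idx k d. const_poly (L j) *
      (\<Prod>i<k. const_poly (of_nat (d i choose j i)) * Xv i ^ (d i - j i) * Yv i ^ (j i)))"

text \<open>[tau] lies in the linear span of nu_d(A): every linear form whose pull-back
  lies in I_A (i.e. every hyperplane containing nu_d(A)) vanishes on tau.\<close>
definition in_span_nu :: "nat \<Rightarrow> (nat \<Rightarrow> nat) \<Rightarrow> cpoly set \<Rightarrow> ((nat \<Rightarrow> nat) \<Rightarrow> complex) \<Rightarrow> bool" where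
  "in_span_nu k d I tau \<longleftrightarrow>
     (\<forall>L. nu_pull k d L \<in> I \<longrightarrow> (\<Sum>j\<in>idx k d. L j * tau j) = 0)"

text \<open>T = W_{d_1} (x) ... (x) W_{d_k}, W_d = x^{d-1} y: the basis tensor with j = (1,...,1).\<close>
definition T_tensor :: "nat \<Rightarrow> (nat \<Rightarrow> nat) \<Rightarrow> complex" where
  "T_tensor k j = (if j = (\<lambda>i. if i < k then 1 else 0) then 1 else 0)"

text \<open>Ideal of Z_k = Z_1 x ... x Z_1, where Z_1 is the degree-2 scheme at [x]
  defined by y^2: the ideal generated by y_1^2, ..., y_k^2.\<close>
definition IZ :: "nat \<Rightarrow> cpoly set" where
  "IZ k = {F. \<exists>g. (\<forall>i<k. g i \<in> Sring k) \<and> F = (\<Sum>i<k. g i * Yv i ^ 2)}"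

end

theory Submission
  imports Defs "HOL-Library.FuncSet"
begin

definition EE :: "nat \<Rightarrow> (nat \<Rightarrow> nat) \<Rightarrow> (nat \<Rightarrow> nat) \<Rightarrow> (nat \<Rightarrow>\<^sub>0 nat)" where
  "EE k p q = (\<Sum>i<k. Poly_Mapping.single (2*i) (p i) + Poly_Mapping.single (2*i+1) (q i))"

lemma EE_even: "Poly_Mapping.lookup (EE k p q) (2*i) = (if i < k then p i else 0)"
  unfolding EE_def
  by (induction k) (auto simp: lookup_add lookup_single when_def less_Suc_eq)

lemma EE_odd: "Poly_Mapping.lookup (EE k p q) (Suc (2*i)) = (if i < k then q i else 0)"
  unfolding EE_def
  by (induction k) (auto simp: lookup_add lookup_single when_def less_Suc_eq)

lemma nat_eo: "\<exists>i. (v::nat) = 2*i \<or> v = 2*i+1"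
  by presburger

lemma EE_keys: "v \<in> Poly_Mapping.keys (EE k p q) \<Longrightarrow> v < 2*k"
proof -
  assume v: "v \<in> Poly_Mapping.keys (EE k p q)"
  obtain i where "v = 2*i \<or> v = 2*i+1" using nat_eo by blast
  then show ?thesis using v by (auto simp: in_keys_iff EE_even EE_odd split: if_splits)
qed

lemma EE_eqI:
  assumes "\<forall>v\<in>Poly_Mapping.keys x. v < 2*k"
    and "\<And>i. i < k \<Longrightarrow> Poly_Mapping.lookup x (2*i) = p i"
    and "\<And>i. i < k \<Longrightarrow> Poly_Mapping.lookup x (2*i+1) = q i"
  shows "x = EE k p q"
proof (rule poly_mapping_eqI)
  fix v :: nat
  obtain i where "v = 2*i \<or> v = 2*i+1" using nat_eo by blast
  then show "Poly_Mapping.lookup x v = Poly_Mapping.lookup (EE k p q) v"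
  proof
    assume v: "v = 2*i"
    show ?thesis
    proof (cases "i < k")
      case True then show ?thesis using v assms(2) by (simp add: EE_even)
    next
      case False
      then have "v \<notin> Poly_Mapping.keys x" using assms(1) v by auto
      then show ?thesis using v False by (simp add: EE_even in_keys_iff)
    qed
  next
    assume v: "v = 2*i+1"
    show ?thesis
    proof (cases "i < k")
      case True then show ?thesis using v assms(3) by (simp add: EE_odd)
    next
      case False
      then have "v \<notin> Poly_Mapping.keys x" using assms(1) v by auto
      then show ?thesis using v False by (simp add: EE_odd in_keys_iff)
    qed
  qed
qed

lemma EE_inj:
  assumes "EE k p q = EE k p' q'" "i < k"
  shows "p i = p' i" "q i = q' i"
  using arg_cong[OF assms(1), of "\<lambda>x. Poly_Mapping.lookup x (2*i)"]
    arg_cong[OF assms(1), of "\<lambda>x. Poly_Mapping.lookup x (2*i+1)"] assms(2)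
  by (simp_all add: EE_even EE_odd)


lemma single_pow': "Poly_Mapping.single (Poly_Mapping.single v 1) (1::complex) ^ n
   = Poly_Mapping.single (Poly_Mapping.single v n) 1"
  by (induction n) (simp_all add: mult_single single_add[symmetric] add.commute)

lemma prod_single: "finite A \<Longrightarrow> (\<Prod>i\<in>A. Poly_Mapping.single (f i) (c i :: complex))
   = Poly_Mapping.single (\<Sum>i\<in>A. f i) (\<Prod>i\<in>A. c i)"
  by (induction A rule: finite_induct) (simp_all add: mult_single)

lemma const_single: "const_poly c * Poly_Mapping.single m b = Poly_Mapping.single m (c*b)"
  by (simp add: const_poly_def mult_single)

definition Cc :: "nat \<Rightarrow> (nat \<Rightarrow> nat) \<Rightarrow> (nat \<Rightarrow> nat) \<Rightarrow> complex" where
  "Cc k d j = (\<Prod>i<k. of_nat (d i choose j i))"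

lemma nu_pull_eq: "nu_pull k d L = (\<Sum>j\<in>idx k d.
     Poly_Mapping.single (EE k (\<lambda>i. d i - j i) j) (L j * Cc k d j))"
proof -
  have "const_poly (of_nat (d i choose j i)) * Xv i ^ (d i - j i) * Yv i ^ (j i)
     = Poly_Mapping.single (Poly_Mapping.single (2*i) (d i - j i) + Poly_Mapping.single (2*i+1) (j i))
        (of_nat (d i choose j i))" for i j
    unfolding Xv_def Yv_def single_pow' by (simp add: const_single mult_single)
  then show ?thesis unfolding nu_pull_def
    by (simp add: prod_single const_single EE_def Cc_def)
qed

lemma pm_decomp: "(F::cpoly) = (\<Sum>m\<in>Poly_Mapping.keys F. Poly_Mapping.single m (Poly_Mapping.lookup F m))"
proof (rule poly_mapping_eqI)
  fix x
  show "Poly_Mapping.lookup F x = Poly_Mapping.lookup (\<Sum>m\<in>Poly_Mapping.keys F. Poly_Mapping.single m (Poly_Mapping.lookup F m)) x"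
    by (simp add: lookup_sum lookup_single when_def in_keys_iff)
qed

lemma lookup_single_mult:
  "Poly_Mapping.lookup (Poly_Mapping.single g c * (F::cpoly)) (g + m) = c * Poly_Mapping.lookup F m"
proof -
  have "Poly_Mapping.single g c * F = (\<Sum>m\<in>Poly_Mapping.keys F. Poly_Mapping.single (g+m) (c * Poly_Mapping.lookup F m))"
    by (subst pm_decomp[of F]) (simp add: sum_distrib_left mult_single)
  then show ?thesis
    by (simp add: lookup_sum lookup_single when_def in_keys_iff)
qed

lemma finite_idx: "finite (idx k d)"
proof -
  have "idx k d \<subseteq> (\<lambda>f i. if i < k then f i else 0) ` (PiE {..<k} (\<lambda>i. {..d i}))"
  proof
    fix j assume j: "j \<in> idx k d"
    have "j = (\<lambda>i. if i < k then restrict j {..<k} i else 0)"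
      using j by (auto simp: idx_def fun_eq_iff not_less restrict_apply)
    moreover have "restrict j {..<k} \<in> PiE {..<k} (\<lambda>i. {..d i})"
      using j by (auto simp: idx_def)
    ultimately show "j \<in> (\<lambda>f i. if i < k then f i else 0) ` (PiE {..<k} (\<lambda>i. {..d i}))"
      by blast
  qed
  moreover have "finite (PiE {..<k} (\<lambda>i. {..d i}))"
    by (rule finite_PiE) auto
  ultimately show ?thesis by (meson finite_surj)
qed

lemma Cc_nz: "j \<in> idx k d \<Longrightarrow> Cc k d j \<noteq> 0"
  by (auto simp: Cc_def idx_def binomial_eq_0_iff)

lemma homog_nu:
  assumes H: "homog k d H"
  shows "H = nu_pull k d (\<lambda>j. Poly_Mapping.lookup H (EE k (\<lambda>i. d i - j i) j) / Cc k d j)"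
proof (rule poly_mapping_eqI)
  fix m
  let ?L = "\<lambda>j. Poly_Mapping.lookup H (EE k (\<lambda>i. d i - j i) j) / Cc k d j"
  have "Poly_Mapping.lookup (nu_pull k d ?L) m =
     (\<Sum>j\<in>idx k d. if EE k (\<lambda>i. d i - j i) j = m then Poly_Mapping.lookup H m else 0)"
    unfolding nu_pull_eq lookup_sum
    by (rule sum.cong) (auto simp: lookup_single when_def Cc_nz)
  also have "\<dots> = Poly_Mapping.lookup H m"
  proof (cases "m \<in> Poly_Mapping.keys H")
    case False
    then have "Poly_Mapping.lookup H m = 0" by (simp add: in_keys_iff)
    then show ?thesis by (simp add: sum.neutral)
  next
    case True
    define j0 where "j0 = (\<lambda>i. if i < k then Poly_Mapping.lookup m (Suc (2*i)) else 0)"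
    have keysm: "\<forall>v\<in>Poly_Mapping.keys m. v < 2*k" and deg: "\<forall>i<k. mdeg m i = d i"
      using H True by (auto simp: homog_def Sring_def)
    have meq: "m = EE k (\<lambda>i. d i - j0 i) j0"
      by (rule EE_eqI[OF keysm]) (use deg in \<open>auto simp: j0_def mdeg_def\<close>)
    have j0i: "j0 \<in> idx k d"
      using deg by (auto simp: idx_def j0_def mdeg_def)
    have "(\<Sum>j\<in>idx k d. if EE k (\<lambda>i. d i - j i) j = m then Poly_Mapping.lookup H m else 0)
        = (\<Sum>j\<in>idx k d. if j = j0 then Poly_Mapping.lookup H m else 0)"
    proof (rule sum.cong)
      fix j assume j: "j \<in> idx k d"
      have "EE k (\<lambda>i. d i - j i) j = m \<longleftrightarrow> j = j0"
      proof
        assume e: "EE k (\<lambda>i. d i - j i) j = m"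
        show "j = j0"
        proof
          fix i show "j i = j0 i"
          proof (cases "i < k")
            case True
            then show ?thesis using EE_inj(2)[OF e[unfolded meq] True] by simp
          next
            case False
            then show ?thesis using j by (simp add: idx_def j0_def)
          qed
        qed
      next
        assume "j = j0" then show "EE k (\<lambda>i. d i - j i) j = m" using meq by simp
      qed
      then show "(if EE k (\<lambda>i. d i - j i) j = m then Poly_Mapping.lookup H m else 0)
         = (if j = j0 then Poly_Mapping.lookup H m else 0)" by simp
    qed simp
    also have "\<dots> = Poly_Mapping.lookup H m"
      using j0i finite_idx by simp
    finally show ?thesis .
  qed
  finally show "Poly_Mapping.lookup H m = Poly_Mapping.lookup (nu_pull k d ?L) m" by simp
qed

lemma Sring_add: "F \<in> Sring k \<Longrightarrow> G \<in> Sring k \<Longrightarrow> F + G \<in> Sring k"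
  using keys_add[of F G] by (auto simp: Sring_def)

lemma IZ_zero: "0 \<in> IZ k"
  unfolding IZ_def by (rule CollectI, rule exI[of _ "\<lambda>_. 0"]) (simp add: Sring_def)

lemma IZ_add: "F \<in> IZ k \<Longrightarrow> G \<in> IZ k \<Longrightarrow> F + G \<in> IZ k"
proof -
  assume "F \<in> IZ k" "G \<in> IZ k"
  then obtain f g where f: "\<forall>i<k. f i \<in> Sring k" "F = (\<Sum>i<k. f i * Yv i ^ 2)"
    and g: "\<forall>i<k. g i \<in> Sring k" "G = (\<Sum>i<k. g i * Yv i ^ 2)"
    unfolding IZ_def by blast
  show ?thesis unfolding IZ_def
    by (rule CollectI, rule exI[of _ "\<lambda>i. f i + g i"])
       (simp add: f g Sring_add sum.distrib distrib_right)
qed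

lemma IZ_sum: "finite A \<Longrightarrow> (\<forall>x\<in>A. f x \<in> IZ k) \<Longrightarrow> sum f A \<in> IZ k"
  by (induction A rule: finite_induct) (auto simp: IZ_zero IZ_add)

lemma IZ_single:
  assumes km: "\<forall>v\<in>Poly_Mapping.keys m. v < 2*k" and i: "i < k"
    and ge: "2 \<le> Poly_Mapping.lookup m (Suc (2*i))"
  shows "Poly_Mapping.single m c \<in> IZ k"
proof -
  define m' where "m' = m - Poly_Mapping.single (Suc (2*i)) 2"
  have mm: "m' + Poly_Mapping.single (Suc (2*i)) 2 = m"
    by (rule poly_mapping_eqI) (use ge in \<open>auto simp: m'_def lookup_add lookup_minus lookup_single when_def\<close>)
  have km': "Poly_Mapping.keys m' \<subseteq> Poly_Mapping.keys m"
    by (auto simp: m'_def in_keys_iff lookup_minus)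
  have S: "Poly_Mapping.single m' c \<in> Sring k"
    using km km' by (auto simp: Sring_def)
  define g where "g = (\<lambda>i'. if i' = i then Poly_Mapping.single m' c else 0)"
  have "(\<Sum>i'<k. g i' * Yv i' ^ 2) = (\<Sum>i'<k. if i' = i then Poly_Mapping.single m' c * Yv i ^ 2 else 0)"
    by (rule sum.cong) (auto simp: g_def)
  also have "\<dots> = Poly_Mapping.single m' c * Yv i ^ 2" using i by simp
  also have "\<dots> = Poly_Mapping.single m c"
    unfolding Yv_def single_pow' by (simp add: mult_single mm[symmetric])
  finally have "Poly_Mapping.single m c = (\<Sum>i'<k. g i' * Yv i' ^ 2)" by simp
  moreover have "\<forall>i'<k. g i' \<in> Sring k" using S by (auto simp: g_def Sring_def)
  ultimately show ?thesis unfolding IZ_def by blast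
qed

lemma IZ_of:
  assumes "F \<in> Sring k" "\<forall>m\<in>Poly_Mapping.keys F. \<exists>i<k. 2 \<le> Poly_Mapping.lookup m (Suc (2*i))"
  shows "F \<in> IZ k"
proof -
  have "(\<Sum>m\<in>Poly_Mapping.keys F. Poly_Mapping.single m (Poly_Mapping.lookup F m)) \<in> IZ k"
  proof (rule IZ_sum[OF finite_keys], rule ballI)
    fix m assume m: "m \<in> Poly_Mapping.keys F"
    then obtain i where "i < k" "2 \<le> Poly_Mapping.lookup m (Suc (2*i))" using assms(2) by blast
    moreover have "\<forall>v\<in>Poly_Mapping.keys m. v < 2*k" using assms(1) m by (auto simp: Sring_def)
    ultimately show "Poly_Mapping.single m (Poly_Mapping.lookup F m) \<in> IZ k" by (intro IZ_single)
  qed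
  then show ?thesis using pm_decomp[of F] by simp
qed

theorem lemma4p1:
  fixes k :: nat and d :: "nat \<Rightarrow> nat" and IA :: "cpoly set"
  assumes "k \<ge> 1"
    and "\<forall>i<k. d i \<ge> 3"
    and "zero_dim_scheme_ideal k IA"
    and "in_span_nu k d IA (T_tensor k)"
  shows "\<forall>a :: nat \<Rightarrow> nat. (\<forall>i<k. a i \<le> d i - 1) \<longrightarrow>
           (\<forall>F. homog k a F \<and> F \<in> IA \<longrightarrow> F \<in> IZ k)"
proof (intro allI impI)
  fix a :: "nat \<Rightarrow> nat" and F
  assume a: "\<forall>i<k. a i \<le> d i - 1" and FH: "homog k a F \<and> F \<in> IA"
  have mh: "mh_ideal k IA" using assms(3) by (simp add: zero_dim_scheme_ideal_def)
  have FS: "F \<in> Sring k" and Fdeg: "\<forall>m\<in>Poly_Mapping.keys F. \<forall>i<k. mdeg m i = a i"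
    using FH by (auto simp: homog_def)
  show "F \<in> IZ k"
  proof (rule IZ_of[OF FS], rule ballI, rule ccontr)
    fix m assume mk: "m \<in> Poly_Mapping.keys F"
      and nm: "\<not> (\<exists>i<k. 2 \<le> Poly_Mapping.lookup m (Suc (2*i)))"
    define e where "e i = Poly_Mapping.lookup m (Suc (2*i))" for i
    have e1: "\<forall>i<k. e i \<le> 1" using nm by (auto simp: e_def not_le)
    have mdm: "\<forall>i<k. Poly_Mapping.lookup m (2*i) + e i = a i"
      using Fdeg mk by (auto simp: mdeg_def e_def)
    have km: "\<forall>v\<in>Poly_Mapping.keys m. v < 2*k" using FS mk by (auto simp: Sring_def)
    define g where "g = EE k (\<lambda>i. d i - a i - (1 - e i)) (\<lambda>i. 1 - e i)"
    define G :: cpoly where "G = Poly_Mapping.single g 1"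
    have GS: "G \<in> Sring k" by (auto simp: G_def Sring_def g_def dest: EE_keys)
    define H where "H = G * F"
    have HI: "H \<in> IA" using mh GS FH by (auto simp: mh_ideal_def H_def)
    have hk: "(\<forall>v\<in>Poly_Mapping.keys m'. v < 2*k) \<and> (\<forall>i<k. mdeg m' i = d i)"
      if mH: "m' \<in> Poly_Mapping.keys H" for m'
    proof -
      obtain b where b: "b \<in> Poly_Mapping.keys F" "m' = g + b"
        using mH keys_mult[of G F] by (auto simp: H_def G_def)
      have kb: "\<forall>v\<in>Poly_Mapping.keys b. v < 2*k" using FS b by (auto simp: Sring_def)
      have 1: "v < 2*k" if "v \<in> Poly_Mapping.keys m'" for v
        using that keys_add[of g b] kb b(2) by (auto simp: g_def dest: EE_keys)
      have 2: "mdeg m' i = d i" if "i < k" for i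
      proof -
        have "mdeg b i = a i" using Fdeg b that by auto
        moreover have "a i \<le> d i - 1" "e i \<le> 1" "3 \<le> d i" using that a e1 assms(2) by auto
        ultimately show ?thesis using that b(2)
          by (simp add: mdeg_def lookup_add g_def EE_even EE_odd)
      qed
      show ?thesis using 1 2 by blast
    qed
    have Hhom: "homog k d H"
      using hk by (auto simp: homog_def Sring_def)
    have lk: "Poly_Mapping.lookup H (g + m) = Poly_Mapping.lookup F m"
      unfolding H_def G_def by (simp add: lookup_single_mult)
    define one where "one = (\<lambda>i::nat. if i < k then (1::nat) else 0)"
    have gm: "g + m = EE k (\<lambda>i. d i - one i) one"
    proof (rule EE_eqI)
      show "\<forall>v\<in>Poly_Mapping.keys (g + m). v < 2 * k"
        using keys_add[of g m] km by (auto simp: g_def dest: EE_keys)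
    next
      fix i assume i: "i < k"
      have "a i \<le> d i - 1" "e i \<le> 1" "3 \<le> d i" "Poly_Mapping.lookup m (2*i) + e i = a i"
        using i a e1 assms(2) mdm by auto
      then show "Poly_Mapping.lookup (g + m) (2*i) = d i - one i"
        using i by (simp add: lookup_add g_def EE_even one_def)
      show "Poly_Mapping.lookup (g + m) (2*i+1) = one i"
        using i e1 by (auto simp: lookup_add g_def EE_odd one_def e_def)
    qed
    define L where "L = (\<lambda>j. Poly_Mapping.lookup H (EE k (\<lambda>i. d i - j i) j) / Cc k d j)"
    have "nu_pull k d L \<in> IA" using homog_nu[OF Hhom] HI by (simp add: L_def)
    then have "(\<Sum>j\<in>idx k d. L j * T_tensor k j) = 0"
      using assms(4) by (simp add: in_span_nu_def)
    moreover have onei: "one \<in> idx k d" using assms(2) by (auto simp: idx_def one_def)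
    moreover have "(\<Sum>j\<in>idx k d. L j * T_tensor k j) = (\<Sum>j\<in>idx k d. if j = one then L j else 0)"
      by (rule sum.cong) (auto simp: T_tensor_def one_def)
    ultimately have "L one = 0" using finite_idx by simp
    moreover have "L one = Poly_Mapping.lookup F m / Cc k d one"
      unfolding L_def gm[symmetric] lk ..
    ultimately show False using Cc_nz[OF onei] mk by (simp add: in_keys_iff)
  qed
qed

end
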